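(* For every graph $G$, $$\Gamma(G) \le \gamma_{\rm i}(G) \le \gamma_{\rm gr}(G).$$ Moreover, $\gamma_{\rm i}$ is incomparable with both $\gamma_g$ and $\mathrm{IR}$; that is, there exist graphs $G$ with $\gamma_{\rm i}(G) > \gamma_g(G)$ and graphs $G$ with $\gamma_{\rm i}(G) < \gamma_g(G)$, and there exist graphs $G$ with $\gamma_{\rm i}(G) > \mathrm{IR}(G)$ and graphs $G$ with $\gamma_{\rm i}(G) < \mathrm{IR}(G)$.
   Context: All graphs are finite and simple. $N[v]$ is the closed neighborhood of $v$, and $N[S]=\bigcup_{v\in S}N[v]$. A set $D$ is dominating if $N[D]=V(G)$. Indicated domination game on $G$: two players, Dominator and Staller, alternate. In each round Dominator indicates a vertex $v$ not yet dominated by the vertices previously selected by Staller, and Staller must select a vertex of $N[v]$, adding it to a set $D$. The game ends when $D$ is a dominating set. Dominator wants to minimize $|D|$ and Staller to maximize it; the size of $D$ under optimal play of both is the indicated domination number $\gamma_{\rm i}(G)$. $\Gamma(G)$ (upper domination number) is the maximum size of a minimal dominating set. For $S\subseteq V(G)$ and $x\in S$, a private neighbor of $x$ with respect to $S$ is a vertex of $N[S]\setminus N[S\setminus\{x\}]$; $S$ is irredundant if every vertex of $S$ has a private neighbor with respect to $S$, and $\mathrm{IR}(G)$ is the maximum size of a maximal irredundant set. A sequence $(v_1,\dots,v_k)$ of vertices is a dominating sequence if $N[v_i]\setminus\bigcup_{j<i}N[v_j]\ne\emptyset$ for each $i$ and $\{v_1,\dots,v_k\}$ dominates $G$; the Grundy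 domination number $\gamma_{\rm gr}(G)$ is the maximum length of a dominating sequence. Domination game: Dominator and Staller alternately select vertices of $G$, Dominator starting; a move is legal if the selected vertex dominates at least one vertex not dominated by previously selected vertices; the game ends when no legal move exists. Dominator wants to minimize and Staller to maximize the number of moves; the number of moves under optimal play is the game domination number $\gamma_g(G)$. *)

theory Defs
  imports Main
begin

definition fin_graph :: "'a set \<Rightarrow> ('a \<Rightarrow> 'a \<Rightarrow> bool) \<Rightarrow> bool" where
  "fin_graph V E \<longleftrightarrow> finite V \<and> (\<forall>u v. E u v \<longrightarrow> u \<in> V \<and> v \<in> V)
     \<and> (\<forall>u v. E u v \<longrightarrow> E v u) \<and> (\<forall>v. \<not> E v v)"

definition cnbhd :: "'a set \<Rightarrow> ('a \<Rightarrow> 'a \<Rightarrow> bool) \<Rightarrow> 'a \<Rightarrow> 'a set" where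
  "cnbhd V E v = {u \<in> V. u = v \<or> E v u}"

definition cnbhd_set :: "'a set \<Rightarrow> ('a \<Rightarrow> 'a \<Rightarrow> bool) \<Rightarrow> 'a set \<Rightarrow> 'a set" where
  "cnbhd_set V E S = (\<Union>v\<in>S. cnbhd V E v)"

definition dominating :: "'a set \<Rightarrow> ('a \<Rightarrow> 'a \<Rightarrow> bool) \<Rightarrow> 'a set \<Rightarrow> bool" where
  "dominating V E D \<longleftrightarrow> D \<subseteq> V \<and> cnbhd_set V E D = V"

definition minimal_dominating :: "'a set \<Rightarrow> ('a \<Rightarrow> 'a \<Rightarrow> bool) \<Rightarrow> 'a set \<Rightarrow> bool" where
  "minimal_dominating V E D \<longleftrightarrow> dominating V E D \<and> (\<forall>T. T \<subset> D \<longrightarrow> \<not> dominating V E T)"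

definition upper_domination :: "'a set \<Rightarrow> ('a \<Rightarrow> 'a \<Rightarrow> bool) \<Rightarrow> nat" where
  "upper_domination V E = Max (card ` {D. minimal_dominating V E D})"

definition irredundant :: "'a set \<Rightarrow> ('a \<Rightarrow> 'a \<Rightarrow> bool) \<Rightarrow> 'a set \<Rightarrow> bool" where
  "irredundant V E S \<longleftrightarrow> S \<subseteq> V \<and>
     (\<forall>x\<in>S. cnbhd_set V E S - cnbhd_set V E (S - {x}) \<noteq> {})"

definition maximal_irredundant :: "'a set \<Rightarrow> ('a \<Rightarrow> 'a \<Rightarrow> bool) \<Rightarrow> 'a set \<Rightarrow> bool" where
  "maximal_irredundant V E S \<longleftrightarrow> irredundant V E S \<and>
     (\<forall>T. S \<subset> T \<longrightarrow> \<not> irredundant V E T)"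

definition upper_irredundance :: "'a set \<Rightarrow> ('a \<Rightarrow> 'a \<Rightarrow> bool) \<Rightarrow> nat" where
  "upper_irredundance V E = Max (card ` {S. maximal_irredundant V E S})"

definition dominating_seq :: "'a set \<Rightarrow> ('a \<Rightarrow> 'a \<Rightarrow> bool) \<Rightarrow> 'a list \<Rightarrow> bool" where
  "dominating_seq V E xs \<longleftrightarrow> set xs \<subseteq> V \<and>
     (\<forall>i<length xs. cnbhd V E (xs ! i) - cnbhd_set V E (set (take i xs)) \<noteq> {}) \<and>
     cnbhd_set V E (set xs) = V"

definition grundy_domination :: "'a set \<Rightarrow> ('a \<Rightarrow> 'a \<Rightarrow> bool) \<Rightarrow> nat" where
  "grundy_domination V E = Max {length xs | xs. dominating_seq V E xs}"

text \<open>Indicated domination game. igv V E n D is the value (number of further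
  Staller selections under optimal play) from the position where Staller has
  selected the set D, with a fuel bound n. Dominator (minimiser) indicates an
  undominated vertex v, Staller (maximiser) selects a vertex of N[v].
  Every selection adds a new vertex, so fuel card V suffices.\<close>
fun igv :: "'a set \<Rightarrow> ('a \<Rightarrow> 'a \<Rightarrow> bool) \<Rightarrow> nat \<Rightarrow> 'a set \<Rightarrow> nat" where
  "igv V E 0 D = 0"
| "igv V E (Suc n) D =
     (if cnbhd_set V E D = V then 0
      else Min ((\<lambda>v. Max ((\<lambda>u. Suc (igv V E n (insert u D))) ` cnbhd V E v))
                 ` (V - cnbhd_set V E D)))"

definition indicated_domination :: "'a set \<Rightarrow> ('a \<Rightarrow> 'a \<Rightarrow> bool) \<Rightarrow> nat" where
  "indicated_domination V E = igv V E (card V) {}"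

text \<open>Domination game. dgv V E n S b: value from position where the set S of
  vertices has been selected and it is Dominator's turn iff b; fuel n.\<close>
definition legal_moves :: "'a set \<Rightarrow> ('a \<Rightarrow> 'a \<Rightarrow> bool) \<Rightarrow> 'a set \<Rightarrow> 'a set" where
  "legal_moves V E S = {v \<in> V. cnbhd V E v - cnbhd_set V E S \<noteq> {}}"

fun dgv :: "'a set \<Rightarrow> ('a \<Rightarrow> 'a \<Rightarrow> bool) \<Rightarrow> nat \<Rightarrow> 'a set \<Rightarrow> bool \<Rightarrow> nat" where
  "dgv V E 0 S b = 0"
| "dgv V E (Suc n) S b =
     (if legal_moves V E S = {} then 0
      else if b then Min ((\<lambda>v. Suc (dgv V E n (insert v S) False)) ` legal_moves V E S)
      else Max ((\<lambda>v. Suc (dgv V E n (insert v S) True)) ` legal_moves V E S))"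

definition game_domination :: "'a set \<Rightarrow> ('a \<Rightarrow> 'a \<Rightarrow> bool) \<Rightarrow> nat" where
  "game_domination V E = dgv V E (card V) {} True"

end

theory Submission
  imports Defs
begin


lemma cnbhd_sub: "cnbhd V E v \<subseteq> V" by (auto simp: cnbhd_def)
lemma cnbhd_self: "v \<in> V \<Longrightarrow> v \<in> cnbhd V E v" by (auto simp: cnbhd_def)
lemma cnbhd_sym: "fin_graph V E \<Longrightarrow> u \<in> cnbhd V E v \<Longrightarrow> v \<in> V \<Longrightarrow> v \<in> cnbhd V E u"
  by (auto simp: cnbhd_def fin_graph_def)
lemma cnbhd_set_sub: "cnbhd_set V E S \<subseteq> V" by (auto simp: cnbhd_set_def cnbhd_def)
lemma cnbhd_set_insert: "cnbhd_set V E (insert u S) = cnbhd V E u \<union> cnbhd_set V E S"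
  by (simp add: cnbhd_set_def)
lemma cnbhd_set_mono: "S \<subseteq> T \<Longrightarrow> cnbhd_set V E S \<subseteq> cnbhd_set V E T"
  by (auto simp: cnbhd_set_def)
lemma cnbhd_set_full: "cnbhd_set V E V = V"
proof
  show "V \<subseteq> cnbhd_set V E V"
  proof
    fix v assume "v \<in> V"
    then show "v \<in> cnbhd_set V E V" unfolding cnbhd_set_def using cnbhd_self[of v V E] by blast
  qed
qed (rule cnbhd_set_sub)

lemma fin_graph_finite: "fin_graph V E \<Longrightarrow> finite V" by (simp add: fin_graph_def)

lemma igv_dom: "cnbhd_set V E D = V \<Longrightarrow> igv V E n D = 0"
  by (cases n) auto

lemma igv_le:
  assumes "finite V" "v \<in> V" "v \<notin> cnbhd_set V E D"
    and "\<forall>u\<in>cnbhd V E v. igv V E n (insert u D) \<le> k"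
  shows "igv V E (Suc n) D \<le> Suc k"
proof (cases "cnbhd_set V E D = V")
  case True then show ?thesis by simp
next
  case False
  let ?f = "\<lambda>v. Max ((\<lambda>u. Suc (igv V E n (insert u D))) ` cnbhd V E v)"
  have fin: "finite (cnbhd V E v)" using finite_subset[OF cnbhd_sub assms(1)] .
  have ne: "cnbhd V E v \<noteq> {}" using cnbhd_self[OF assms(2)] by blast
  have "?f v \<le> Suc k" using fin ne assms(4) by (simp add: Max_le_iff)
  moreover have "Min (?f ` (V - cnbhd_set V E D)) \<le> ?f v"
    using assms by (intro Min_le) auto
  ultimately show ?thesis using False by simp
qed

lemma igv_ge:
  assumes "finite V" "cnbhd_set V E D \<noteq> V"
    and "\<forall>v\<in>V - cnbhd_set V E D. \<exists>u\<in>cnbhd V E v. k \<le> igv V E n (insert u D)"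
  shows "Suc k \<le> igv V E (Suc n) D"
proof -
  let ?f = "\<lambda>v. Max ((\<lambda>u. Suc (igv V E n (insert u D))) ` cnbhd V E v)"
  have ne: "V - cnbhd_set V E D \<noteq> {}" using assms(2) cnbhd_set_sub[of V E D] by auto
  have "\<forall>v\<in>V - cnbhd_set V E D. Suc k \<le> ?f v"
  proof
    fix v assume v: "v \<in> V - cnbhd_set V E D"
    have fin: "finite (cnbhd V E v)" using finite_subset[OF cnbhd_sub assms(1)] .
    obtain u where u: "u \<in> cnbhd V E v" "k \<le> igv V E n (insert u D)" using bspec[OF assms(3) v] by blast
    have "Suc (igv V E n (insert u D)) \<le> ?f v" using fin u(1) by (intro Max_ge) auto
    then show "Suc k \<le> ?f v" using u(2) by simp
  qed
  moreover have A: "finite (?f ` (V - cnbhd_set V E D))" "?f ` (V - cnbhd_set V E D) \<noteq> {}"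
    using ne assms(1) by auto
  ultimately have "Suc k \<le> Min (?f ` (V - cnbhd_set V E D))"
    using Min_ge_iff[OF A] by blast
  then show ?thesis using assms(2) unfolding igv.simps(2) by simp
qed

declare igv.simps(2)[simp del]

lemma igv_ge_minimal:
  assumes g: "fin_graph V E" and md: "minimal_dominating V E Ds"
  shows "D \<subseteq> Ds \<Longrightarrow> card V \<le> n + card D \<Longrightarrow> card Ds \<le> igv V E n D + card D"
proof (induction n arbitrary: D)
  have finV: "finite V" using g fin_graph_finite by blast
  have DsV: "Ds \<subseteq> V" using md by (simp add: minimal_dominating_def dominating_def)
  case 0
  then show ?case using card_mono[OF finV DsV] by simp
next
  have finV: "finite V" using g fin_graph_finite by blast
  have DsV: "Ds \<subseteq> V" using md by (simp add: minimal_dominating_def dominating_def)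
  have finDs: "finite Ds" using finV DsV finite_subset by blast
  case (Suc n)
  show ?case
  proof (cases "cnbhd_set V E D = V")
    case True
    then have "dominating V E D" using Suc.prems DsV by (auto simp: dominating_def)
    then have "D = Ds" using md Suc.prems(1) by (auto simp: minimal_dominating_def)
    then show ?thesis by simp
  next
    case False
    let ?f = "\<lambda>v. Max ((\<lambda>u. Suc (igv V E n (insert u D))) ` cnbhd V E v)"
    have ne: "V - cnbhd_set V E D \<noteq> {}" using False cnbhd_set_sub[of V E D] by auto
    have "\<forall>v\<in>V - cnbhd_set V E D. card Ds - card D \<le> ?f v"
    proof
      fix v assume v: "v \<in> V - cnbhd_set V E D"
      have fin: "finite (cnbhd V E v)" using finite_subset[OF cnbhd_sub finV] .
      have "v \<in> cnbhd_set V E Ds" using md v by (simp add: minimal_dominating_def dominating_def)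
      then obtain x where x: "x \<in> Ds" "v \<in> cnbhd V E x" by (auto simp: cnbhd_set_def)
      have xv: "x \<in> cnbhd V E v" using cnbhd_sym[OF g x(2)] x(1) DsV by blast
      have xD: "x \<notin> D" using x(2) v by (auto simp: cnbhd_set_def)
      have finD: "finite D" using Suc.prems(1) finDs finite_subset by blast
      have cins: "card (insert x D) = Suc (card D)" using xD finD by simp
      have "card Ds \<le> igv V E n (insert x D) + card (insert x D)"
        using Suc.IH[of "insert x D"] Suc.prems x(1) cins by simp
      then have "card Ds - card D \<le> Suc (igv V E n (insert x D))" using cins by simp
      moreover have "Suc (igv V E n (insert x D)) \<le> ?f v" using fin xv by (intro Max_ge) auto
      ultimately show "card Ds - card D \<le> ?f v" by simp
    qed
    moreover have A: "finite (?f ` (V - cnbhd_set V E D))" "?f ` (V - cnbhd_set V E D) \<noteq> {}"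
      using ne finV by auto
    ultimately have "card Ds - card D \<le> Min (?f ` (V - cnbhd_set V E D))"
      using Min_ge_iff[OF A] by blast
    then show ?thesis using False unfolding igv.simps(2) by simp
  qed
qed

lemma exists_minimal_dominating:
  assumes g: "fin_graph V E" shows "\<exists>D. minimal_dominating V E D"
proof -
  have finV: "finite V" using g fin_graph_finite by blast
  have "V \<subseteq> cnbhd_set V E V"
  proof
    fix v assume "v \<in> V"
    then show "v \<in> cnbhd_set V E V" unfolding cnbhd_set_def using cnbhd_self[of v V E] by blast
  qed
  then have "cnbhd_set V E V = V" using cnbhd_set_sub[of V E V] by (rule equalityI[rotated])
  then have "dominating V E V" unfolding dominating_def by simp
  then obtain D where D: "dominating V E D" "\<forall>T. dominating V E T \<longrightarrow> card D \<le> card T"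
    using ex_has_least_nat[of "dominating V E" V card] by blast
  have "D \<subseteq> V" using D(1) by (simp add: dominating_def)
  then have finD: "finite D" using finV by (rule finite_subset)
  have "\<not> dominating V E T" if "T \<subset> D" for T
  proof
    assume "dominating V E T"
    then have "card D \<le> card T" using D(2) by blast
    moreover have "card T < card D" using psubset_card_mono[OF finD that] .
    ultimately show False by simp
  qed
  then show ?thesis using D(1) unfolding minimal_dominating_def by blast
qed

lemma part1:
  assumes g: "fin_graph V E"
  shows "upper_domination V E \<le> indicated_domination V E"
proof -
  have finV: "finite V" using g fin_graph_finite by blast
  have fin: "finite {D. minimal_dominating V E D}"
    by (rule finite_subset[of _ "Pow V"])
       (auto simp: minimal_dominating_def dominating_def finV)
  have ne: "{D. minimal_dominating V E D} \<noteq> {}" using exists_minimal_dominating[OF g] by blast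
  have "upper_domination V E \<in> card ` {D. minimal_dominating V E D}"
    unfolding upper_domination_def using fin ne by (intro Max_in) auto
  then obtain Ds where Ds: "minimal_dominating V E Ds" "upper_domination V E = card Ds" by auto
  show ?thesis using igv_ge_minimal[OF g Ds(1), of "{}" "card V"] Ds(2)
    by (simp add: indicated_domination_def)
qed

definition footprint :: "'a set \<Rightarrow> ('a \<Rightarrow> 'a \<Rightarrow> bool) \<Rightarrow> 'a list \<Rightarrow> bool" where
  "footprint V E xs \<longleftrightarrow> set xs \<subseteq> V \<and>
     (\<forall>i<length xs. cnbhd V E (xs ! i) - cnbhd_set V E (set (take i xs)) \<noteq> {})"

lemma footprint_distinct: "footprint V E xs \<Longrightarrow> distinct xs"
proof (rule ccontr)
  assume fp: "footprint V E xs" and nd: "\<not> distinct xs"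
  obtain i j where ij: "i < j" "j < length xs" "xs ! i = xs ! j"
    using nd unfolding distinct_conv_nth by (metis linorder_neqE_nat)
  have l: "i < length (take j xs)" using ij by simp
  have "take j xs ! i = xs ! i" using ij by simp
  then have "xs ! j \<in> set (take j xs)" using nth_mem[OF l] ij(3) by simp
  then have "cnbhd V E (xs ! j) \<subseteq> cnbhd_set V E (set (take j xs))" by (auto simp: cnbhd_set_def)
  then show False using fp ij(2) by (auto simp: footprint_def)
qed

lemma grundy_finite:
  assumes "finite V"
  shows "finite {length xs | xs. dominating_seq V E xs}"
proof (rule finite_subset[of _ "{..card V}"])
  show "{length xs | xs. dominating_seq V E xs} \<subseteq> {..card V}"
  proof
    fix l assume "l \<in> {length xs | xs. dominating_seq V E xs}"
    then obtain xs where xs: "l = length xs" "dominating_seq V E xs" by blast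
    then have "footprint V E xs" by (simp add: footprint_def dominating_seq_def)
    then have "distinct xs" by (rule footprint_distinct)
    then have "length xs = card (set xs)" by (simp add: distinct_card)
    also have "\<dots> \<le> card V" using xs(2) assms by (intro card_mono) (auto simp: dominating_seq_def)
    finally show "l \<in> {..card V}" using xs by simp
  qed
qed simp

lemma dseq_le_grundy:
  assumes "finite V" "dominating_seq V E xs"
  shows "length xs \<le> grundy_domination V E"
  unfolding grundy_domination_def using assms grundy_finite[OF assms(1)]
  by (intro Max_ge) auto

lemma igv_le_grundy:
  assumes g: "fin_graph V E"
  shows "footprint V E xs \<Longrightarrow> card V \<le> n + length xs \<Longrightarrow>
         igv V E n (set xs) + length xs \<le> grundy_domination V E"
proof (induction n arbitrary: xs)
  have finV: "finite V" using g fin_graph_finite by blast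
  case 0
  have "distinct xs" using 0 footprint_distinct by blast
  then have "card (set xs) = length xs" by (simp add: distinct_card)
  moreover have sub: "set xs \<subseteq> V" using 0 by (simp add: footprint_def)
  ultimately have "set xs = V" using 0 finV card_seteq[OF finV sub] by simp
  then have "cnbhd_set V E (set xs) = V" using cnbhd_set_full[of V E] by simp
  then have "dominating_seq V E xs" using 0 by (simp add: dominating_seq_def footprint_def)
  then show ?case using dseq_le_grundy[OF finV] by simp
next
  have finV: "finite V" using g fin_graph_finite by blast
  case (Suc n)
  show ?case
  proof (cases "cnbhd_set V E (set xs) = V")
    case True
    then have "dominating_seq V E xs" using Suc.prems by (simp add: dominating_seq_def footprint_def)
    moreover have "igv V E (Suc n) (set xs) = 0" using True by (rule igv_dom)
    ultimately show ?thesis using dseq_le_grundy[OF finV] by simp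
  next
    case False
    then obtain v where v: "v \<in> V" "v \<notin> cnbhd_set V E (set xs)" using cnbhd_set_sub[of V E "set xs"] by auto
    have "\<forall>u\<in>cnbhd V E v. igv V E n (insert u (set xs)) \<le> grundy_domination V E - Suc (length xs)"
    proof
      fix u assume u: "u \<in> cnbhd V E v"
      have uV: "u \<in> V" using cnbhd_sub[of V E v] u by blast
      have vu: "v \<in> cnbhd V E u" using cnbhd_sym[OF g u v(1)] .
      have "footprint V E (xs @ [u])"
        unfolding footprint_def
      proof (intro conjI allI impI)
        show "set (xs @ [u]) \<subseteq> V" using Suc.prems uV by (simp add: footprint_def)
      next
        fix i assume i: "i < length (xs @ [u])"
        show "cnbhd V E ((xs @ [u]) ! i) - cnbhd_set V E (set (take i (xs @ [u]))) \<noteq> {}"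
        proof (cases "i < length xs")
          case True
          then have "(xs @ [u]) ! i = xs ! i" "take i (xs @ [u]) = take i xs" by (simp_all add: nth_append)
          moreover have "cnbhd V E (xs ! i) - cnbhd_set V E (set (take i xs)) \<noteq> {}"
            using Suc.prems(1) True unfolding footprint_def by blast
          ultimately show ?thesis by simp
        next
          case False
          then have "i = length xs" using i by simp
          then have "(xs @ [u]) ! i = u" "take i (xs @ [u]) = xs" by simp_all
          moreover have "cnbhd V E u - cnbhd_set V E (set xs) \<noteq> {}" using vu v(2) by blast
          ultimately show ?thesis by simp
        qed
      qed
      then have "igv V E n (set (xs @ [u])) + length (xs @ [u]) \<le> grundy_domination V E"
        using Suc.IH[of "xs @ [u]"] Suc.prems(2) by simp
      then show "igv V E n (insert u (set xs)) \<le> grundy_domination V E - Suc (length xs)"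
        by simp
    qed
    then have "igv V E (Suc n) (set xs) \<le> Suc (grundy_domination V E - Suc (length xs))"
      using igv_le[OF finV v] by simp
    moreover have "length xs < grundy_domination V E"
    proof -
      obtain u where "u \<in> cnbhd V E v" using cnbhd_self[OF v(1)] by blast
      have "footprint V E (xs @ [v])"
        unfolding footprint_def
      proof (intro conjI allI impI)
        show "set (xs @ [v]) \<subseteq> V" using Suc.prems v by (simp add: footprint_def)
      next
        fix i assume i: "i < length (xs @ [v])"
        show "cnbhd V E ((xs @ [v]) ! i) - cnbhd_set V E (set (take i (xs @ [v]))) \<noteq> {}"
        proof (cases "i < length xs")
          case True
          then have "(xs @ [v]) ! i = xs ! i" "take i (xs @ [v]) = take i xs" by (simp_all add: nth_append)
          moreover have "cnbhd V E (xs ! i) - cnbhd_set V E (set (take i xs)) \<noteq> {}"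
            using Suc.prems(1) True unfolding footprint_def by blast
          ultimately show ?thesis by simp
        next
          case False
          then have "i = length xs" using i by simp
          then have "(xs @ [v]) ! i = v" "take i (xs @ [v]) = xs" by simp_all
          moreover have "cnbhd V E v - cnbhd_set V E (set xs) \<noteq> {}" using cnbhd_self[OF v(1)] v(2) by blast
          ultimately show ?thesis by simp
        qed
      qed
      then have "igv V E n (set (xs @ [v])) + length (xs @ [v]) \<le> grundy_domination V E"
        using Suc.IH[of "xs @ [v]"] Suc.prems(2) by simp
      then show ?thesis by simp
    qed
    ultimately show ?thesis by simp
  qed
qed

lemma part2:
  assumes g: "fin_graph V E"
  shows "indicated_domination V E \<le> grundy_domination V E"
  using igv_le_grundy[OF g, of "[]" "card V"]
  by (simp add: indicated_domination_def footprint_def)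




lemma irr_hered: "irredundant V E T \<Longrightarrow> S \<subseteq> T \<Longrightarrow> irredundant V E S"
  unfolding irredundant_def
proof (intro conjI ballI)
  assume a: "T \<subseteq> V \<and> (\<forall>x\<in>T. cnbhd_set V E T - cnbhd_set V E (T - {x}) \<noteq> {})" and st: "S \<subseteq> T"
  then show "S \<subseteq> V" by blast
  fix x assume x: "x \<in> S"
  then have xT: "x \<in> T" using st by blast
  have "cnbhd_set V E T - cnbhd_set V E (T - {x}) \<noteq> {}" using a xT by blast
  then obtain p where p: "p \<in> cnbhd_set V E T" "p \<notin> cnbhd_set V E (T - {x})" by blast
  then obtain y where y: "y \<in> T" "p \<in> cnbhd V E y" unfolding cnbhd_set_def by blast
  have "y = x"
  proof (rule ccontr)
    assume "y \<noteq> x"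
    then have "y \<in> T - {x}" using y(1) by blast
    then have "p \<in> cnbhd_set V E (T - {x})" using y(2) unfolding cnbhd_set_def by blast
    then show False using p(2) by blast
  qed
  then have "p \<in> cnbhd_set V E S" using x y(2) unfolding cnbhd_set_def by blast
  moreover have "cnbhd_set V E (S - {x}) \<subseteq> cnbhd_set V E (T - {x})"
    using st by (intro cnbhd_set_mono) blast
  then have "p \<notin> cnbhd_set V E (S - {x})" using p(2) by blast
  ultimately show "cnbhd_set V E S - cnbhd_set V E (S - {x}) \<noteq> {}" by blast
qed

lemma maxirr_iff: "maximal_irredundant V E S \<longleftrightarrow>
   irredundant V E S \<and> (\<forall>x\<in>V - S. \<not> irredundant V E (insert x S))"
proof
  assume "maximal_irredundant V E S"
  then show "irredundant V E S \<and> (\<forall>x\<in>V - S. \<not> irredundant V E (insert x S))"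
    unfolding maximal_irredundant_def by blast
next
  assume a: "irredundant V E S \<and> (\<forall>x\<in>V - S. \<not> irredundant V E (insert x S))"
  have "\<not> irredundant V E T" if st: "S \<subset> T" for T
  proof
    assume t: "irredundant V E T"
    obtain x where x: "x \<in> T" "x \<notin> S" using st by blast
    have "T \<subseteq> V" using t unfolding irredundant_def by blast
    then have "x \<in> V" using x by blast
    moreover have "insert x S \<subseteq> T" using x st by blast
    then have "irredundant V E (insert x S)" using irr_hered[OF t] by blast
    ultimately show False using a x by blast
  qed
  then show "maximal_irredundant V E S" using a unfolding maximal_irredundant_def by blast
qed

lemma maxirr_set: "{S. maximal_irredundant V E S} =
   Set.filter (\<lambda>S. irredundant V E S \<and> (\<forall>x\<in>V - S. \<not> irredundant V E (insert x S))) (Pow V)"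
proof -
  have "\<And>S. maximal_irredundant V E S \<Longrightarrow> S \<subseteq> V"
    unfolding maximal_irredundant_def irredundant_def by blast
  then show ?thesis unfolding Set.filter_eq maxirr_iff[symmetric] by blast
qed

lemma IR_exec: "upper_irredundance V E = Max (card `
   Set.filter (\<lambda>S. irredundant V E S \<and> (\<forall>x\<in>V - S. \<not> irredundant V E (insert x S))) (Pow V))"
  unfolding upper_irredundance_def maxirr_set ..

lemma IR_ge:
  assumes "finite V" "maximal_irredundant V E S"
  shows "card S \<le> upper_irredundance V E"
proof -
  have "finite {S. maximal_irredundant V E S}" unfolding maxirr_set using assms(1) by simp
  then show ?thesis unfolding upper_irredundance_def using assms(2) by (intro Max_ge) auto
qed

lemma dgv_ge_Dom:
  assumes "finite V" "legal_moves V E S \<noteq> {}"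
    "\<forall>v\<in>legal_moves V E S. k \<le> dgv V E n (insert v S) False"
  shows "Suc k \<le> dgv V E (Suc n) S True"
proof -
  let ?f = "\<lambda>v. Suc (dgv V E n (insert v S) False)"
  have "finite (legal_moves V E S)" using assms(1) unfolding legal_moves_def by simp
  then have A: "finite (?f ` legal_moves V E S)" "?f ` legal_moves V E S \<noteq> {}" using assms(2) by auto
  have "\<forall>a\<in>?f ` legal_moves V E S. Suc k \<le> a" using assms(3) by auto
  then have "Suc k \<le> Min (?f ` legal_moves V E S)" using Min_ge_iff[OF A] by blast
  then show ?thesis using assms(2) unfolding dgv.simps(2) by simp
qed

lemma dgv_ge_Sta:
  assumes "finite V" "v \<in> legal_moves V E S" "k \<le> dgv V E n (insert v S) True"
  shows "Suc k \<le> dgv V E (Suc n) S False"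
proof -
  let ?f = "\<lambda>v. Suc (dgv V E n (insert v S) True)"
  have "finite (legal_moves V E S)" using assms(1) unfolding legal_moves_def by simp
  then have "?f v \<le> Max (?f ` legal_moves V E S)" using assms(2) by (intro Max_ge) auto
  moreover have "legal_moves V E S \<noteq> {}" using assms(2) by blast
  ultimately show ?thesis using assms(3) unfolding dgv.simps(2) by simp
qed

definition V1 :: "nat set" where "V1 = {0,1,2}"
definition E1 :: "nat \<Rightarrow> nat \<Rightarrow> bool" where
  "E1 u v \<longleftrightarrow> (u,v) \<in> {(0,1),(0,2)} \<or> (v,u) \<in> {(0,1),(0,2)}"

lemma g1: "fin_graph V1 E1" unfolding fin_graph_def V1_def E1_def by auto
lemma ex1: "indicated_domination V1 E1 > game_domination V1 E1"
  unfolding V1_def E1_def by code_simp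

definition V3 :: "nat set" where "V3 = {0,1,2,3,4}"
definition E3 :: "nat \<Rightarrow> nat \<Rightarrow> bool" where
  "E3 u v \<longleftrightarrow> (u,v) \<in> {(0,1),(1,2),(2,3),(3,4),(4,0)} \<or> (v,u) \<in> {(0,1),(1,2),(2,3),(3,4),(4,0)}"

lemma g3: "fin_graph V3 E3" unfolding fin_graph_def V3_def E3_def by auto
lemma ex3a: "indicated_domination V3 E3 = 3"
  unfolding V3_def E3_def by code_simp
lemma ex3b: "upper_irredundance V3 E3 = 2"
  unfolding IR_exec V3_def E3_def by code_simp

definition VG :: "nat set" where "VG = {0,1,2,3,4,5,6,7}"
definition EG :: "nat \<Rightarrow> nat \<Rightarrow> bool" where
  "EG u v \<longleftrightarrow> (u,v) \<in> {(0,2),(0,3),(0,7),(1,3),(1,4),(1,5),(1,6),(2,3),(2,4),(2,7),(3,7),(4,5),(4,6),(5,6),(5,7)}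
     \<or> (v,u) \<in> {(0,2),(0,3),(0,7),(1,3),(1,4),(1,5),(1,6),(2,3),(2,4),(2,7),(3,7),(4,5),(4,6),(5,6),(5,7)}"

lemma gG: "fin_graph VG EG" unfolding fin_graph_def VG_def EG_def by auto

lemma finVG: "finite VG" unfolding VG_def by simp

lemma checkG1: "\<forall>u\<in>cnbhd VG EG 0. 6 \<notin> cnbhd_set VG EG {u} \<and>
   (\<forall>w\<in>cnbhd VG EG 6. cnbhd_set VG EG (insert w {u}) = VG)"
  unfolding VG_def EG_def by code_simp

lemma exG_ind: "indicated_domination VG EG \<le> 2"
proof -
  have "igv VG EG (Suc 6) {u} \<le> Suc 0" if u: "u \<in> cnbhd VG EG 0" for u
  proof (rule igv_le[OF finVG])
    show "6 \<in> VG" unfolding VG_def by simp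
    show "6 \<notin> cnbhd_set VG EG {u}" using checkG1 u by blast
    show "\<forall>w\<in>cnbhd VG EG 6. igv VG EG 6 (insert w {u}) \<le> 0"
      using checkG1 u igv_dom by (metis le_refl)
  qed
  then have h: "\<forall>u\<in>cnbhd VG EG 0. igv VG EG 7 (insert u {}) \<le> 1" by (simp add: numeral_eq_Suc)
  have "igv VG EG (Suc 7) {} \<le> Suc 1"
  proof (rule igv_le[OF finVG _ _ h])
    show "0 \<in> VG" unfolding VG_def by simp
    show "0 \<notin> cnbhd_set VG EG {}" unfolding cnbhd_set_def by simp
  qed
  moreover have "card VG = 8" unfolding VG_def by simp
  ultimately show ?thesis unfolding indicated_domination_def by simp
qed

definition fG :: "nat \<Rightarrow> nat" where "fG v = [2,4,3,2,1,1,1,2::nat] ! v"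

lemma checkG2: "legal_moves VG EG {} \<noteq> {} \<and> (\<forall>v\<in>legal_moves VG EG {}. fG v \<in> legal_moves VG EG {v}
   \<and> legal_moves VG EG (insert (fG v) {v}) \<noteq> {})"
  unfolding VG_def EG_def fG_def by code_simp

lemma exG_game: "3 \<le> game_domination VG EG"
proof -
  have "Suc 2 \<le> dgv VG EG (Suc 7) {} True"
  proof (rule dgv_ge_Dom[OF finVG])
    show "legal_moves VG EG {} \<noteq> {}" using checkG2 by blast
    show "\<forall>v\<in>legal_moves VG EG {}. 2 \<le> dgv VG EG 7 (insert v {}) False"
    proof
      fix v assume v: "v \<in> legal_moves VG EG {}"
      have l: "fG v \<in> legal_moves VG EG {v}" "legal_moves VG EG (insert (fG v) {v}) \<noteq> {}"
        using checkG2 v by blast+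
      have "Suc 0 \<le> dgv VG EG (Suc 5) (insert (fG v) {v}) True"
        using l(2) by (intro dgv_ge_Dom[OF finVG]) auto
      then have "Suc (Suc 0) \<le> dgv VG EG (Suc 6) {v} False"
        using l(1) by (intro dgv_ge_Sta[OF finVG]) auto
      then show "2 \<le> dgv VG EG 7 (insert v {}) False" by (simp add: numeral_eq_Suc)
    qed
  qed
  moreover have "card VG = 8" unfolding VG_def by simp
  ultimately show ?thesis unfolding game_domination_def by (simp add: numeral_eq_Suc)
qed

lemma checkG3: "maximal_irredundant VG EG {1,4,5}"
  unfolding maxirr_iff VG_def EG_def by code_simp

lemma exG_IR: "3 \<le> upper_irredundance VG EG"
  using IR_ge[OF finVG checkG3] by simp


theorem proposition3p1:
  fixes V :: "'a set" and E :: "'a \<Rightarrow> 'a \<Rightarrow> bool"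
  assumes "fin_graph V E"
  shows "upper_domination V E \<le> indicated_domination V E
       \<and> indicated_domination V E \<le> grundy_domination V E
       \<and> (\<exists>(V1::nat set) E1. fin_graph V1 E1 \<and> indicated_domination V1 E1 > game_domination V1 E1)
       \<and> (\<exists>(V2::nat set) E2. fin_graph V2 E2 \<and> indicated_domination V2 E2 < game_domination V2 E2)
       \<and> (\<exists>(V3::nat set) E3. fin_graph V3 E3 \<and> indicated_domination V3 E3 > upper_irredundance V3 E3)
       \<and> (\<exists>(V4::nat set) E4. fin_graph V4 E4 \<and> indicated_domination V4 E4 < upper_irredundance V4 E4)"
proof (intro conjI)
  show "upper_domination V E \<le> indicated_domination V E" using part1[OF assms] .
  show "indicated_domination V E \<le> grundy_domination V E" using part2[OF assms] .
  show "\<exists>(V1::nat set) E1. fin_graph V1 E1 \<and> indicated_domination V1 E1 > game_domination V1 E1"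
    using g1 ex1 by blast
  have "indicated_domination VG EG < game_domination VG EG" using exG_ind exG_game by simp
  then show "\<exists>(V2::nat set) E2. fin_graph V2 E2 \<and> indicated_domination V2 E2 < game_domination V2 E2"
    using gG by blast
  have "indicated_domination V3 E3 > upper_irredundance V3 E3" using ex3a ex3b by simp
  then show "\<exists>(V3::nat set) E3. fin_graph V3 E3 \<and> indicated_domination V3 E3 > upper_irredundance V3 E3"
    using g3 by blast
  have "indicated_domination VG EG < upper_irredundance VG EG" using exG_ind exG_IR by simp
  then show "\<exists>(V4::nat set) E4. fin_graph V4 E4 \<and> indicated_domination V4 E4 < upper_irredundance V4 E4"
    using gG by blast
qed

end
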